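(* Let $\Theta$ be a space of input histories satisfying the free-choice condition. Then $\Theta$ is causally complete if and only if for every $k\in\mathrm{Ext}(\Theta)$ with $|\mathrm{dom}(k)|\ge 2$ there exists $\omega\in\mathrm{dom}(k)$ such that $k|_{\mathrm{dom}(k)\setminus\{\omega\}}\in\mathrm{Ext}(\Theta)$.
   Context: A partial function on a family $(Y_x)_{x\in X}$ is a function $f$ with domain $\mathrm{dom}(f)\subseteq X$ and $f(x)\in Y_x$ for $x\in\mathrm{dom}(f)$; ordered by restriction: $f\le g$ iff $\mathrm{dom}(f)\subseteq\mathrm{dom}(g)$ and $g|_{\mathrm{dom}(f)}=f$. Two partial functions are compatible if they agree on the intersection of their domains; a compatible set $\mathcal F$ has join $\bigvee\mathcal F$, the partial function on $\bigcup_{f\in\mathcal F}\mathrm{dom}(f)$ extending each $f\in\mathcal F$. A set $\Theta$ is $\vee$-prime if for every compatible $\mathcal F\subseteq\Theta$ with $\bigvee\mathcal F\in\Theta$ we have $\bigvee\mathcal F\in\mathcal F$. A space of input histories is a finite $\vee$-prime set $\Theta$ of partial functions; $E^\Theta=\bigcup_{h\in\Theta}\mathrm{dom}(h)$, $I^\Theta_\omega=\{h(\omega):h\in\Theta,\omega\in\mathrm{dom}(h)\}$; $\mathrm{Ext}(\Theta)=\{\bigvee\mathcal F:\emptyset\ne\mathcal F\subseteq\Theta\text{ compatible}\}$. Free-choice condition: the maximal elements of $\mathrm{Ext}(\Theta)$ are exactly the total functions in $\prod_{\omega\in E^\Theta}I^\Theta_\omega$. $\mathrm{tips}_\Theta(h)=\mathrm{dom}(h)\setminus\bigcup\{\mathrm{dom}(k):k\in\mathrm{Ext}(\Theta),k<h\}$.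 $\Theta$ is causally complete if it satisfies free choice and $|\mathrm{tips}_\Theta(h)|=1$ for all $h\in\Theta$. *)

theory Defs
  imports Main
begin

(* Partial functions on a family (Y_x) are modelled as maps 'x => 'y option (family absorbed in one codomain type); the order f <= g is map inclusion. *)

definition compatible :: "('x \<rightharpoonup> 'y) set \<Rightarrow> bool" where
  "compatible F \<longleftrightarrow> (\<forall>f\<in>F. \<forall>g\<in>F. \<forall>x\<in>dom f \<inter> dom g. f x = g x)"

definition join :: "('x \<rightharpoonup> 'y) set \<Rightarrow> ('x \<rightharpoonup> 'y)" where
  "join F = (\<lambda>x. if \<exists>f\<in>F. x \<in> dom f then (SOME f. f \<in> F \<and> x \<in> dom f) x else None)"

definition vee_prime :: "('x \<rightharpoonup> 'y) set \<Rightarrow> bool" where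
  "vee_prime \<Theta> \<longleftrightarrow> (\<forall>F. F \<subseteq> \<Theta> \<and> compatible F \<and> join F \<in> \<Theta> \<longrightarrow> join F \<in> F)"

definition input_history_space :: "('x \<rightharpoonup> 'y) set \<Rightarrow> bool" where
  "input_history_space \<Theta> \<longleftrightarrow> finite \<Theta> \<and> vee_prime \<Theta>"

definition events :: "('x \<rightharpoonup> 'y) set \<Rightarrow> 'x set" where
  "events \<Theta> = (\<Union>h\<in>\<Theta>. dom h)"

definition inputs :: "('x \<rightharpoonup> 'y) set \<Rightarrow> 'x \<Rightarrow> 'y set" where
  "inputs \<Theta> \<omega> = {v. \<exists>h\<in>\<Theta>. \<omega> \<in> dom h \<and> h \<omega> = Some v}"

definition Ext :: "('x \<rightharpoonup> 'y) set \<Rightarrow> ('x \<rightharpoonup> 'y) set" where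
  "Ext \<Theta> = {join F | F. F \<noteq> {} \<and> F \<subseteq> \<Theta> \<and> compatible F}"

definition free_choice :: "('x \<rightharpoonup> 'y) set \<Rightarrow> bool" where
  "free_choice \<Theta> \<longleftrightarrow>
     {k \<in> Ext \<Theta>. \<forall>k'\<in>Ext \<Theta>. k \<subseteq>\<^sub>m k' \<longrightarrow> k' = k}
     = {f. dom f = events \<Theta> \<and> (\<forall>\<omega>\<in>events \<Theta>. the (f \<omega>) \<in> inputs \<Theta> \<omega>)}"

definition tips :: "('x \<rightharpoonup> 'y) set \<Rightarrow> ('x \<rightharpoonup> 'y) \<Rightarrow> 'x set" where
  "tips \<Theta> h = dom h - \<Union>{dom k | k. k \<in> Ext \<Theta> \<and> k \<subseteq>\<^sub>m h \<and> k \<noteq> h}"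

definition causally_complete :: "('x \<rightharpoonup> 'y) set \<Rightarrow> bool" where
  "causally_complete \<Theta> \<longleftrightarrow> free_choice \<Theta> \<and> (\<forall>h\<in>\<Theta>. \<exists>!\<omega>. \<omega> \<in> tips \<Theta> h)"

end

theory Submission
  imports Defs
begin

lemma join_below:
  assumes "\<forall>f\<in>F. f \<subseteq>\<^sub>m m"
  shows "join F = m |` (\<Union>f\<in>F. dom f)"
proof
  fix x
  show "join F x = (m |` (\<Union>f\<in>F. dom f)) x"
  proof (cases "\<exists>f\<in>F. x \<in> dom f")
    case True
    have s: "(SOME f. f \<in> F \<and> x \<in> dom f) \<in> F \<and> x \<in> dom (SOME f. f \<in> F \<and> x \<in> dom f)"
      using someI_ex[OF True[unfolded Bex_def]] .
    then have "(SOME f. f \<in> F \<and> x \<in> dom f) x = m x"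
      using assms unfolding map_le_def by blast
    then show ?thesis using True unfolding join_def by (simp add: restrict_map_def)
  next
    case False
    then show ?thesis unfolding join_def by (auto simp: restrict_map_def)
  qed
qed

lemma below_compatible:
  assumes "\<forall>f\<in>F. f \<subseteq>\<^sub>m m"
  shows "compatible F"
  using assms unfolding compatible_def map_le_def by (metis IntD1 IntD2)

lemma join_upper:
  assumes "compatible F" "f \<in> F"
  shows "f \<subseteq>\<^sub>m join F"
  unfolding map_le_def
proof
  fix x assume x: "x \<in> dom f"
  then have ex: "\<exists>g\<in>F. x \<in> dom g" using assms by blast
  have s: "(SOME g. g \<in> F \<and> x \<in> dom g) \<in> F \<and> x \<in> dom (SOME g. g \<in> F \<and> x \<in> dom g)"
    using someI_ex[OF ex[unfolded Bex_def]] .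
  then have "(SOME g. g \<in> F \<and> x \<in> dom g) x = f x"
    using assms x unfolding compatible_def by blast
  then show "f x = join F x" using ex unfolding join_def by simp
qed

lemma dom_join: "dom (join F) = (\<Union>f\<in>F. dom f)"
proof -
  have iff: "x \<in> dom (join F) \<longleftrightarrow> (\<exists>f\<in>F. x \<in> dom f)" for x
  proof
    assume a: "x \<in> dom (join F)" show "\<exists>f\<in>F. x \<in> dom f"
    proof (rule ccontr)
      assume "\<not> (\<exists>f\<in>F. x \<in> dom f)"
      then have "join F x = None" unfolding join_def by simp
      then show False using a by auto
    qed
  next
    assume ex: "\<exists>f\<in>F. x \<in> dom f"
    have s: "(SOME g. g \<in> F \<and> x \<in> dom g) \<in> F \<and> x \<in> dom (SOME g. g \<in> F \<and> x \<in> dom g)"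
      using someI_ex[OF ex[unfolded Bex_def]] .
    have "join F x = (SOME g. g \<in> F \<and> x \<in> dom g) x" using ex unfolding join_def by simp
    then show "x \<in> dom (join F)" using s by (simp add: domIff)
  qed
  show ?thesis by (rule set_eqI) (subst UN_iff, rule iff)
qed

lemma Ext_elim:
  assumes "k \<in> Ext \<Theta>"
  obtains F where "F \<noteq> {}" "F \<subseteq> \<Theta>" "compatible F" "k = join F"
    "\<forall>f\<in>F. f \<subseteq>\<^sub>m k" "dom k = (\<Union>f\<in>F. dom f)"
proof -
  obtain F where F: "k = join F" "F \<noteq> {}" "F \<subseteq> \<Theta>" "compatible F"
    using assms unfolding Ext_def by blast
  have "\<forall>f\<in>F. f \<subseteq>\<^sub>m k" using F(1,4) join_upper by blast
  moreover have "dom k = (\<Union>f\<in>F. dom f)" using F(1) dom_join by simp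
  ultimately show ?thesis by (rule that[OF F(2) F(3) F(4) F(1)])
qed

lemma Ext_intro:
  assumes "F \<noteq> {}" "F \<subseteq> \<Theta>" "\<forall>f\<in>F. f \<subseteq>\<^sub>m m"
  shows "m |` (\<Union>f\<in>F. dom f) \<in> Ext \<Theta>"
proof -
  have "join F \<in> Ext \<Theta>" unfolding Ext_def using assms(1,2) below_compatible[OF assms(3)] by blast
  then show ?thesis using join_below[OF assms(3)] by simp
qed

lemma vp_nonempty:
  assumes "vee_prime \<Theta>" "h \<in> \<Theta>"
  shows "dom h \<noteq> {}"
proof
  assume d: "dom h = {}"
  obtain E where E: "E = {}" "E \<subseteq> \<Theta>" by blast
  have "join E = h" using d E(1) unfolding join_def by auto
  then have jT: "join E \<in> \<Theta>" using assms(2) by simp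
  have c: "compatible E" using E(1) by (simp add: compatible_def)
  have "\<forall>F. F \<subseteq> \<Theta> \<and> compatible F \<and> join F \<in> \<Theta> \<longrightarrow> join F \<in> F"
    using assms(1) unfolding vee_prime_def .
  then have "E \<subseteq> \<Theta> \<and> compatible E \<and> join E \<in> \<Theta> \<longrightarrow> join E \<in> E" by (rule spec)
  then show False using jT c E by simp
qed

lemma restrict_full: "m |` dom m = m"
  by (intro ext) (simp add: restrict_map_def domIff)

lemma ex1_single: "w \<in> S \<Longrightarrow> S \<subseteq> {w} \<Longrightarrow> \<exists>!x. x \<in> S"
  by blast

theorem theorem6:
  fixes \<Theta> :: "('x \<rightharpoonup> 'y) set"
  assumes "input_history_space \<Theta>" and "free_choice \<Theta>"
  shows "causally_complete \<Theta> \<longleftrightarrow>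
    (\<forall>k\<in>Ext \<Theta>. (\<exists>a b. a \<in> dom k \<and> b \<in> dom k \<and> a \<noteq> b) \<longrightarrow>
       (\<exists>\<omega>\<in>dom k. k |` (dom k - {\<omega>}) \<in> Ext \<Theta>))"
proof
  have fin: "finite \<Theta>" and vp: "vee_prime \<Theta>" using assms(1) unfolding input_history_space_def by auto
  assume cc: "causally_complete \<Theta>"
  then have ut: "\<And>h. h \<in> \<Theta> \<Longrightarrow> \<exists>!\<omega>. \<omega> \<in> tips \<Theta> h" unfolding causally_complete_def by auto
  show "\<forall>k\<in>Ext \<Theta>. (\<exists>a b. a \<in> dom k \<and> b \<in> dom k \<and> a \<noteq> b) \<longrightarrow>
       (\<exists>\<omega>\<in>dom k. k |` (dom k - {\<omega>}) \<in> Ext \<Theta>)"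
  proof (intro ballI impI)
    fix k assume k: "k \<in> Ext \<Theta>" and "\<exists>a b. a \<in> dom k \<and> b \<in> dom k \<and> a \<noteq> b"
    then obtain a b where ab: "a \<in> dom k" "b \<in> dom k" "a \<noteq> b" by blast
    obtain F where F: "F \<noteq> {}" "F \<subseteq> \<Theta>" "\<forall>f\<in>F. f \<subseteq>\<^sub>m k" "dom k = (\<Union>f\<in>F. dom f)"
      using Ext_elim[OF k] by metis
    define H where "H = {h \<in> \<Theta>. h \<subseteq>\<^sub>m k}"
    define Hx where "Hx x = {h \<in> H. x \<in> dom h}" for x
    have finHx: "finite (Hx x)" for x using fin unfolding Hx_def H_def by auto
    have neHx: "Hx x \<noteq> {}" if "x \<in> dom k" for x
      using that F unfolding Hx_def H_def by blast
    define cnt where "cnt h = card {g \<in> \<Theta>. g \<subseteq>\<^sub>m h}" for h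
    have cnt_less: "cnt g < cnt h" if "g \<subseteq>\<^sub>m h" "g \<noteq> h" "h \<in> \<Theta>" for g h
    proof -
      have "{f \<in> \<Theta>. f \<subseteq>\<^sub>m g} \<subset> {f \<in> \<Theta>. f \<subseteq>\<^sub>m h}"
        using that map_le_trans map_le_antisym map_le_refl by blast
      then show ?thesis unfolding cnt_def using fin by (simp add: psubset_card_mono)
    qed
    have tipmin: "x \<in> tips \<Theta> h" if x: "x \<in> dom k" and h: "h \<in> Hx x"
      and hmin: "\<forall>g\<in>Hx x. cnt h \<le> cnt g" for x h
    proof -
      have hT: "h \<in> \<Theta>" "h \<subseteq>\<^sub>m k" "x \<in> dom h" using h unfolding Hx_def H_def by auto
      show ?thesis unfolding tips_def
      proof (rule DiffI[OF hT(3)], rule notI)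
        assume "x \<in> \<Union>{dom k' |k'. k' \<in> Ext \<Theta> \<and> k' \<subseteq>\<^sub>m h \<and> k' \<noteq> h}"
        then obtain k' where k': "k' \<in> Ext \<Theta>" "k' \<subseteq>\<^sub>m h" "k' \<noteq> h" "x \<in> dom k'" by blast
        obtain F' where F': "F' \<subseteq> \<Theta>" "\<forall>f\<in>F'. f \<subseteq>\<^sub>m k'" "dom k' = (\<Union>f\<in>F'. dom f)"
          using Ext_elim[OF k'(1)] by metis
        then obtain f where f: "f \<in> F'" "x \<in> dom f" using k'(4) by blast
        have fk: "f \<subseteq>\<^sub>m k'" using F' f by auto
        have fh: "f \<subseteq>\<^sub>m h" using map_le_trans[OF fk k'(2)] .
        have fne: "f \<noteq> h" using fk k'(2) k'(3) map_le_antisym by blast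
        have "f \<in> Hx x" unfolding Hx_def H_def using f F' fh hT map_le_trans by blast
        then have "cnt h \<le> cnt f" using hmin by blast
        moreover have "cnt f < cnt h" using cnt_less[OF fh fne hT(1)] .
        ultimately show False by simp
      qed
    qed
    have exmin: "\<exists>h\<in>Hx x. \<forall>g\<in>Hx x. cnt h \<le> cnt g" if xk: "x \<in> dom k" for x
    proof -
      obtain h0 where "h0 \<in> Hx x" using neHx[OF xk] by blast
      then show ?thesis using ex_has_least_nat[of "\<lambda>h. h \<in> Hx x" h0 cnt] by blast
    qed
    obtain \<omega> where w: "\<omega> \<in> dom k" "\<forall>x\<in>dom k. card (Hx \<omega>) \<le> card (Hx x)"
      using ex_has_least_nat[of "\<lambda>x. x \<in> dom k" a "\<lambda>x. card (Hx x)"] ab(1) by blast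
    have cover: "\<exists>h\<in>Hx x. \<omega> \<notin> dom h" if x: "x \<in> dom k" "x \<noteq> \<omega>" for x
    proof (rule ccontr)
      assume "\<not> ?thesis"
      then have sub: "Hx x \<subseteq> Hx \<omega>" unfolding Hx_def by blast
      have "card (Hx \<omega>) \<le> card (Hx x)" using w x by blast
      then have eq: "Hx x = Hx \<omega>" using sub finHx card_subset_eq by (metis card_mono le_antisym)
      obtain h where h: "h \<in> Hx x" "\<forall>g\<in>Hx x. cnt h \<le> cnt g" using exmin[OF x(1)] by blast
      have t1: "x \<in> tips \<Theta> h" using tipmin[OF x(1) h] .
      have t2: "\<omega> \<in> tips \<Theta> h" using tipmin[OF w(1)] h eq by simp
      have "h \<in> \<Theta>" using h unfolding Hx_def H_def by auto
      then show False using ut t1 t2 x(2) by blast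
    qed
    define G where "G = {h \<in> H. \<omega> \<notin> dom h}"
    have Gd: "(\<Union>g\<in>G. dom g) = dom k - {\<omega>}"
    proof
      show "(\<Union>g\<in>G. dom g) \<subseteq> dom k - {\<omega>}"
        unfolding G_def H_def using map_le_implies_dom_le by blast
      show "dom k - {\<omega>} \<subseteq> (\<Union>g\<in>G. dom g)"
        using cover unfolding G_def Hx_def by blast
    qed
    have Gne: "G \<noteq> {}"
    proof -
      obtain x where "x \<in> dom k" "x \<noteq> \<omega>" using ab by blast
      then show ?thesis using cover unfolding G_def Hx_def by blast
    qed
    have "k |` (\<Union>g\<in>G. dom g) \<in> Ext \<Theta>"
      by (rule Ext_intro[OF Gne]) (auto simp: G_def H_def)
    then show "\<exists>\<omega>\<in>dom k. k |` (dom k - {\<omega>}) \<in> Ext \<Theta>" using Gd w(1) by auto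
  qed
next
  have fin: "finite \<Theta>" and vp: "vee_prime \<Theta>" using assms(1) unfolding input_history_space_def by auto
  assume R: "\<forall>k\<in>Ext \<Theta>. (\<exists>a b. a \<in> dom k \<and> b \<in> dom k \<and> a \<noteq> b) \<longrightarrow>
       (\<exists>\<omega>\<in>dom k. k |` (dom k - {\<omega>}) \<in> Ext \<Theta>)"
  have "\<exists>!\<omega>. \<omega> \<in> tips \<Theta> h" if hT: "h \<in> \<Theta>" for h
  proof -
    have "h |` (\<Union>f\<in>{h}. dom f) \<in> Ext \<Theta>" by (rule Ext_intro) (use hT in auto)
    then have hE: "h \<in> Ext \<Theta>" by (simp add: restrict_full)
    show ?thesis
    proof (cases "\<exists>a b. a \<in> dom h \<and> b \<in> dom h \<and> a \<noteq> b")
      case False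
      obtain \<omega> where w: "\<omega> \<in> dom h" using vp_nonempty[OF vp hT] by blast
      then have dh: "dom h = {\<omega>}" using False by blast
      have "\<omega> \<in> tips \<Theta> h" unfolding tips_def
      proof (rule DiffI[OF w], rule notI)
        assume "\<omega> \<in> \<Union>{dom k' |k'. k' \<in> Ext \<Theta> \<and> k' \<subseteq>\<^sub>m h \<and> k' \<noteq> h}"
        then obtain k' where k': "k' \<in> Ext \<Theta>" "k' \<subseteq>\<^sub>m h" "k' \<noteq> h" "\<omega> \<in> dom k'" by blast
        have "dom h \<subseteq> dom k'" using dh k'(4) by simp
        then have "dom k' = dom h" by (rule subset_antisym[OF map_le_implies_dom_le[OF k'(2)]])
        then have "h \<subseteq>\<^sub>m k'" using k'(2) unfolding map_le_def by auto
        then show False using k' map_le_antisym by blast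
      qed
      moreover have "tips \<Theta> h \<subseteq> {\<omega>}" unfolding tips_def dh[symmetric] by (rule Diff_subset)
      ultimately show ?thesis by (rule ex1_single)
    next
      case True
      then obtain \<omega> where w: "\<omega> \<in> dom h" and h'E: "h |` (dom h - {\<omega>}) \<in> Ext \<Theta>"
        using R hE by blast
      define h' where "h' = h |` (dom h - {\<omega>})"
      have h'le: "h' \<subseteq>\<^sub>m h" unfolding h'_def map_le_def by (auto simp: restrict_map_def split: if_splits)
      have dh': "dom h' = dom h - {\<omega>}" unfolding h'_def by auto
      have h'ne: "h' \<noteq> h" using dh' w by auto
      have h'E': "h' \<in> Ext \<Theta>" using h'E unfolding h'_def .
      have sub: "tips \<Theta> h \<subseteq> {\<omega>}"
      proof
        fix y assume y: "y \<in> tips \<Theta> h"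
        show "y \<in> {\<omega>}"
        proof (rule ccontr)
          assume "y \<notin> {\<omega>}"
          then have yd: "y \<in> dom h'" using y dh' unfolding tips_def by auto
          have "dom h' \<in> {dom k' |k'. k' \<in> Ext \<Theta> \<and> k' \<subseteq>\<^sub>m h \<and> k' \<noteq> h}"
            using h'E' h'le h'ne by blast
          then have "y \<in> \<Union>{dom k' |k'. k' \<in> Ext \<Theta> \<and> k' \<subseteq>\<^sub>m h \<and> k' \<noteq> h}"
            using yd by (rule UnionI)
          then show False using y unfolding tips_def by blast
        qed
      qed
      have "\<omega> \<in> tips \<Theta> h" unfolding tips_def
      proof (rule DiffI[OF w], rule notI)
        assume "\<omega> \<in> \<Union>{dom k' |k'. k' \<in> Ext \<Theta> \<and> k' \<subseteq>\<^sub>m h \<and> k' \<noteq> h}"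
        then obtain k' where k': "k' \<in> Ext \<Theta>" "k' \<subseteq>\<^sub>m h" "k' \<noteq> h" "\<omega> \<in> dom k'" by blast
        obtain F where F: "F \<subseteq> \<Theta>" "\<forall>f\<in>F. f \<subseteq>\<^sub>m k'" "dom k' = (\<Union>f\<in>F. dom f)"
          using Ext_elim[OF k'(1)] by metis
        obtain G where G: "G \<subseteq> \<Theta>" "\<forall>f\<in>G. f \<subseteq>\<^sub>m h'" "dom h' = (\<Union>f\<in>G. dom f)"
          using Ext_elim[OF h'E'] by metis
        have below: "\<forall>f\<in>F \<union> G. f \<subseteq>\<^sub>m h"
          using F(2) G(2) k'(2) h'le map_le_trans by blast
        have eq: "(\<Union>f\<in>F \<union> G. dom f) = dom h"
        proof
          show "(\<Union>f\<in>F \<union> G. dom f) \<subseteq> dom h" using below map_le_implies_dom_le by blast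
          show "dom h \<subseteq> (\<Union>f\<in>F \<union> G. dom f)"
          proof
            fix x assume x: "x \<in> dom h"
            show "x \<in> (\<Union>f\<in>F \<union> G. dom f)"
            proof (cases "x = \<omega>")
              case True
              then have "x \<in> (\<Union>f\<in>F. dom f)" using F(3) k'(4) by simp
              then obtain g where "g \<in> F" "x \<in> dom g" by (rule UN_E)
              then show ?thesis by blast
            next
              case False
              then have "x \<in> dom h'" using dh' x by simp
              then have "x \<in> (\<Union>f\<in>G. dom f)" using G(3) by simp
              then obtain g where "g \<in> G" "x \<in> dom g" by (rule UN_E)
              then show ?thesis by blast
            qed
          qed
        qed
        have "join (F \<union> G) = h |` dom h" using join_below[OF below] eq by simp
        then have jn: "join (F \<union> G) = h" by (simp add: restrict_full)
        have "\<forall>F. F \<subseteq> \<Theta> \<and> compatible F \<and> join F \<in> \<Theta> \<longrightarrow> join F \<in> F"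
          using vp unfolding vee_prime_def .
        then have "F \<union> G \<subseteq> \<Theta> \<and> compatible (F \<union> G) \<and> join (F \<union> G) \<in> \<Theta> \<longrightarrow> join (F \<union> G) \<in> F \<union> G"
          by (rule spec)
        then have "h \<in> F \<union> G" using below_compatible[OF below] F(1) G(1) hT jn by simp
        then show False
        proof
          assume "h \<in> F" then have "h \<subseteq>\<^sub>m k'" using F by blast
          then show False using k' map_le_antisym by blast
        next
          assume "h \<in> G" then have "h \<subseteq>\<^sub>m h'" using G by blast
          then show False using map_le_implies_dom_le w dh' by blast
        qed
      qed
      then show ?thesis using sub by (rule ex1_single)
    qed
  qed
  then show "causally_complete \<Theta>" using assms(2) unfolding causally_complete_def by blast
qed

end
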